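(* Let $G_1,G_2$ be locally compact groups and $M_1,M_2$ locally compact topological spaces. Suppose $G_j$ acts properly on $M_j$ for $j=1,2$, and $G_2$ also acts (not necessarily properly) on $M_1$, commuting with the action of $G_1$. Then the action of $G_1\times G_2$ on $M_1\times M_2$ given by $(g_1,g_2)\cdot(m_1,m_2)=(g_1g_2m_1,g_2m_2)$ is proper.
   Context: An action of a topological group $H$ on a topological space $X$ is proper if for every compact $K\subseteq X$ the set $\{h\in H: hK\cap K\neq\emptyset\}$ is compact. *)

theory Defs
  imports "HOL-Analysis.Analysis" "HOL-Algebra.Group"
begin

definition topological_group :: "'a monoid \<Rightarrow> 'a topology \<Rightarrow> bool" where
  "topological_group G T \<longleftrightarrow>
     group G \<and> topspace T = carrier G \<and>
     continuous_map (prod_topology T T) T (\<lambda>(x, y). x \<otimes>\<^bsub>G\<^esub> y) \<and>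
     continuous_map T T (\<lambda>x. inv\<^bsub>G\<^esub> x)"

text \<open>Locally compact (Hausdorff, as is the standard convention).\<close>
definition lc_space :: "'a topology \<Rightarrow> bool" where
  "lc_space X \<longleftrightarrow> Hausdorff_space X \<and> locally_compact_space X"

definition continuous_action ::
  "'a monoid \<Rightarrow> 'a topology \<Rightarrow> 'm topology \<Rightarrow> ('a \<Rightarrow> 'm \<Rightarrow> 'm) \<Rightarrow> bool" where
  "continuous_action G T X act \<longleftrightarrow>
     topological_group G T \<and>
     (\<forall>g\<in>carrier G. \<forall>x\<in>topspace X. act g x \<in> topspace X) \<and>
     (\<forall>x\<in>topspace X. act \<one>\<^bsub>G\<^esub> x = x) \<and>
     (\<forall>g\<in>carrier G. \<forall>h\<in>carrier G. \<forall>x\<in>topspace X.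
        act (g \<otimes>\<^bsub>G\<^esub> h) x = act g (act h x)) \<and>
     continuous_map (prod_topology T X) X (\<lambda>(g, x). act g x)"

definition proper_action ::
  "'a monoid \<Rightarrow> 'a topology \<Rightarrow> 'm topology \<Rightarrow> ('a \<Rightarrow> 'm \<Rightarrow> 'm) \<Rightarrow> bool" where
  "proper_action G T X act \<longleftrightarrow>
     continuous_action G T X act \<and>
     (\<forall>K. compactin X K \<longrightarrow>
        compactin T {h \<in> carrier G. act h ` K \<inter> K \<noteq> {}})"

end

theory Submission
  imports Defs
begin

lemma cm2:
  assumes "continuous_map (prod_topology X Y) Z (\<lambda>(x,y). h x y)"
    and "continuous_map W X f" and "continuous_map W Y g"
  shows "continuous_map W Z (\<lambda>z. h (f z) (g z))"
  using continuous_map_compose[OF continuous_map_pairedI[OF assms(2,3)] assms(1)]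
  by (simp add: o_def)

lemma ffst: "continuous_map (prod_topology (prod_topology A B) (prod_topology C D)) A (\<lambda>z. fst (fst z))"
  using continuous_map_compose[OF continuous_map_fst continuous_map_fst] by (simp add: o_def)
lemma sfst: "continuous_map (prod_topology (prod_topology A B) (prod_topology C D)) B (\<lambda>z. snd (fst z))"
  using continuous_map_compose[OF continuous_map_fst continuous_map_snd] by (simp add: o_def)
lemma fsnd: "continuous_map (prod_topology (prod_topology A B) (prod_topology C D)) C (\<lambda>z. fst (snd z))"
  using continuous_map_compose[OF continuous_map_snd continuous_map_fst] by (simp add: o_def)
lemma ssnd: "continuous_map (prod_topology (prod_topology A B) (prod_topology C D)) D (\<lambda>z. snd (snd z))"
  using continuous_map_compose[OF continuous_map_snd continuous_map_snd] by (simp add: o_def)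

theorem lemma3p4:
  fixes G1 :: "'a monoid" and T1 :: "'a topology"
    and G2 :: "'b monoid" and T2 :: "'b topology"
    and M1 :: "'m topology" and M2 :: "'n topology"
    and act1 :: "'a \<Rightarrow> 'm \<Rightarrow> 'm" and act2 :: "'b \<Rightarrow> 'n \<Rightarrow> 'n"
    and act21 :: "'b \<Rightarrow> 'm \<Rightarrow> 'm"
  assumes "topological_group G1 T1" and "lc_space T1"
    and "topological_group G2 T2" and "lc_space T2"
    and "lc_space M1" and "lc_space M2"
    and "proper_action G1 T1 M1 act1"
    and "proper_action G2 T2 M2 act2"
    and "continuous_action G2 T2 M1 act21"
    and commute: "\<forall>g1\<in>carrier G1. \<forall>g2\<in>carrier G2. \<forall>m\<in>topspace M1.
                    act1 g1 (act21 g2 m) = act21 g2 (act1 g1 m)"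
  shows "proper_action (G1 \<times>\<times> G2) (prod_topology T1 T2) (prod_topology M1 M2)
           (\<lambda>(g1, g2) (m1, m2). (act1 g1 (act21 g2 m1), act2 g2 m2))"
proof -
  define F where "F = (\<lambda>(g1, g2) (m1, m2). (act1 g1 (act21 g2 m1), act2 g2 m2))"
  note tg1 = assms(1)[unfolded topological_group_def]
  note tg2 = assms(3)[unfolded topological_group_def]
  note pa1 = assms(7)[unfolded proper_action_def continuous_action_def]
  note pa2 = assms(8)[unfolded proper_action_def continuous_action_def]
  note ca21 = assms(9)[unfolded continuous_action_def]
  have H1: "Hausdorff_space M1" "Hausdorff_space M2"
    using assms(5,6) by (auto simp: lc_space_def)
  have grp: "group (G1 \<times>\<times> G2)" using tg1 tg2 DirProd_group by blast
  have TG: "topological_group (G1 \<times>\<times> G2) (prod_topology T1 T2)"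
    unfolding topological_group_def
  proof (intro conjI)
    show "group (G1 \<times>\<times> G2)" by (rule grp)
    show "topspace (prod_topology T1 T2) = carrier (G1 \<times>\<times> G2)"
      using tg1 tg2 by simp
    have eq: "(\<lambda>(x, y). x \<otimes>\<^bsub>G1 \<times>\<times> G2\<^esub> y) =
       (\<lambda>z. (fst (fst z) \<otimes>\<^bsub>G1\<^esub> fst (snd z), snd (fst z) \<otimes>\<^bsub>G2\<^esub> snd (snd z)))"
      by (auto simp: fun_eq_iff mult_DirProd')
    show "continuous_map (prod_topology (prod_topology T1 T2) (prod_topology T1 T2))
       (prod_topology T1 T2) (\<lambda>(x, y). x \<otimes>\<^bsub>G1 \<times>\<times> G2\<^esub> y)"
      unfolding eq
      apply (rule continuous_map_pairedI)
       apply (rule cm2[where h="\<lambda>x y. x \<otimes>\<^bsub>G1\<^esub> y" and X=T1 and Y=T1])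
         apply (use tg1 in simp)
        apply (rule ffst)
       apply (rule fsnd)
      apply (rule cm2[where h="\<lambda>x y. x \<otimes>\<^bsub>G2\<^esub> y" and X=T2 and Y=T2])
        apply (use tg2 in simp)
       apply (rule sfst)
      apply (rule ssnd)
      done
    have c: "continuous_map (prod_topology T1 T2) (prod_topology T1 T2)
        (\<lambda>z. (inv\<^bsub>G1\<^esub> fst z, inv\<^bsub>G2\<^esub> snd z))"
      apply (rule continuous_map_pairedI)
       apply (rule continuous_map_compose[OF continuous_map_fst, unfolded o_def])
      using tg1 apply simp
      apply (rule continuous_map_compose[OF continuous_map_snd, unfolded o_def])
      using tg2 apply simp
      done
    show "continuous_map (prod_topology T1 T2) (prod_topology T1 T2) (\<lambda>x. inv\<^bsub>G1 \<times>\<times> G2\<^esub> x)"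
      apply (rule continuous_map_eq[OF c])
      using tg1 tg2 by (auto simp: inv_DirProd)
  qed
  have contF: "continuous_map (prod_topology (prod_topology T1 T2) (prod_topology M1 M2))
      (prod_topology M1 M2) (\<lambda>(g, x). F g x)"
  proof -
    have eq: "(\<lambda>(g, x). F g x) = (\<lambda>z. (act1 (fst (fst z)) (act21 (snd (fst z)) (fst (snd z))),
          act2 (snd (fst z)) (snd (snd z))))"
      by (auto simp: F_def fun_eq_iff)
    show ?thesis
      unfolding eq
      apply (rule continuous_map_pairedI)
       apply (rule cm2[where h="act1" and X=T1 and Y=M1])
         apply (use pa1 in simp)
        apply (rule ffst)
       apply (rule cm2[where h="act21" and X=T2 and Y=M1])
         apply (use ca21 in simp)
        apply (rule sfst)
       apply (rule fsnd)
      apply (rule cm2[where h="act2" and X=T2 and Y=M2])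
        apply (use pa2 in simp)
       apply (rule sfst)
      apply (rule ssnd)
      done
  qed
  have CA: "continuous_action (G1 \<times>\<times> G2) (prod_topology T1 T2) (prod_topology M1 M2) F"
    unfolding continuous_action_def
  proof (intro conjI TG contF)
    show "\<forall>g\<in>carrier (G1 \<times>\<times> G2). \<forall>x\<in>topspace (prod_topology M1 M2). F g x \<in> topspace (prod_topology M1 M2)"
      using pa1 pa2 ca21 by (auto simp: F_def)
    show "\<forall>x\<in>topspace (prod_topology M1 M2). F \<one>\<^bsub>G1 \<times>\<times> G2\<^esub> x = x"
      using pa1 pa2 ca21 by (auto simp: F_def)
    show "\<forall>g\<in>carrier (G1 \<times>\<times> G2). \<forall>h\<in>carrier (G1 \<times>\<times> G2). \<forall>x\<in>topspace (prod_topology M1 M2).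
       F (g \<otimes>\<^bsub>G1 \<times>\<times> G2\<^esub> h) x = F g (F h x)"
    proof (clarsimp simp: F_def)
      fix g1 g2 h1 h2 m1 m2
      assume a: "g1 \<in> carrier G1" "g2 \<in> carrier G2" "h1 \<in> carrier G1" "h2 \<in> carrier G2"
        "m1 \<in> topspace M1" "m2 \<in> topspace M2"
      have "act21 h2 m1 \<in> topspace M1" using ca21 a by blast
      then show "act1 (g1 \<otimes>\<^bsub>G1\<^esub> h1) (act21 (g2 \<otimes>\<^bsub>G2\<^esub> h2) m1) =
          act1 g1 (act21 g2 (act1 h1 (act21 h2 m1))) \<and>
          act2 (g2 \<otimes>\<^bsub>G2\<^esub> h2) m2 = act2 g2 (act2 h2 m2)"
        using a pa1 pa2 ca21 commute by auto
    qed
  qed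
  show ?thesis
    unfolding proper_action_def F_def[symmetric]
  proof (intro conjI CA allI impI)
    fix K assume K: "compactin (prod_topology M1 M2) K"
    define K1 where "K1 = fst ` K"
    define K2 where "K2 = snd ` K"
    have cK1: "compactin M1 K1" unfolding K1_def using K continuous_map_fst image_compactin by blast
    have cK2: "compactin M2 K2" unfolding K2_def using K continuous_map_snd image_compactin by blast
    define C2 where "C2 = {h \<in> carrier G2. act2 h ` K2 \<inter> K2 \<noteq> {}}"
    have cC2: "compactin T2 C2" unfolding C2_def using pa2 cK2 by blast
    define L where "L = (\<lambda>(g, x). act21 g x) ` (C2 \<times> K1)"
    have cL: "compactin M1 L" unfolding L_def
      by (rule image_compactin[OF _ conjunct2[OF conjunct2[OF conjunct2[OF conjunct2[OF ca21]]]]])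
        (simp add: compactin_Times cC2 cK1)
    define C1 where "C1 = {h \<in> carrier G1. act1 h ` (K1 \<union> L) \<inter> (K1 \<union> L) \<noteq> {}}"
    have cC1: "compactin T1 C1" unfolding C1_def using pa1 cK1 cL compactin_Un by blast
    define S where "S = {h \<in> carrier (G1 \<times>\<times> G2). F h ` K \<inter> K \<noteq> {}}"
    have Ksub: "K \<subseteq> topspace M1 \<times> topspace M2" using K compactin_subset_topspace by fastforce
    have SC: "S \<subseteq> C1 \<times> C2"
    proof
      fix g assume "g \<in> S"
      then obtain g1 g2 m1 m2 where g: "g = (g1, g2)" "g1 \<in> carrier G1" "g2 \<in> carrier G2"
        "(m1, m2) \<in> K" "F g (m1, m2) \<in> K"
      proof -
        from \<open>g \<in> S\<close> obtain x where gx: "g \<in> carrier (G1 \<times>\<times> G2)" "x \<in> K" "F g x \<in> K"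
          unfolding S_def by blast
        obtain g1 g2 where "g = (g1, g2)" by (cases g)
        moreover obtain m1 m2 where "x = (m1, m2)" by (cases x)
        ultimately show ?thesis using that gx by auto
      qed
      have m: "m1 \<in> topspace M1" "m2 \<in> topspace M2" using Ksub g by auto
      have "act2 g2 m2 \<in> K2" using g unfolding K2_def F_def by force
      moreover have "m2 \<in> K2" using g unfolding K2_def by force
      ultimately have g2C: "g2 \<in> C2" unfolding C2_def using g by blast
      have "m1 \<in> K1" using g unfolding K1_def by force
      then have "act21 g2 m1 \<in> L" unfolding L_def using g2C by force
      moreover have "act1 g1 (act21 g2 m1) \<in> K1" using g unfolding K1_def F_def by force
      ultimately have "g1 \<in> C1" unfolding C1_def using g by blast
      then show "g \<in> C1 \<times> C2" using g g2C by simp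
    qed
    define A where "A = {z \<in> topspace (prod_topology (prod_topology T1 T2) (prod_topology M1 M2)).
        (\<lambda>(g, x). F g x) z \<in> K}"
    have clA: "closedin (prod_topology (prod_topology T1 T2) (prod_topology M1 M2)) A"
      unfolding A_def
      by (rule closedin_continuous_map_preimage[OF contF compactin_imp_closedin[OF _ K]])
        (simp add: Hausdorff_space_prod_topology H1)
    have cB: "compactin (prod_topology (prod_topology T1 T2) (prod_topology M1 M2)) ((C1 \<times> C2) \<times> K)"
      using cC1 cC2 K by (simp add: compactin_Times)
    have cAB: "compactin (prod_topology (prod_topology T1 T2) (prod_topology M1 M2)) (A \<inter> ((C1 \<times> C2) \<times> K))"
      by (rule closed_Int_compactin[OF clA cB])
    have "S = fst ` (A \<inter> ((C1 \<times> C2) \<times> K))"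
    proof
      show "S \<subseteq> fst ` (A \<inter> ((C1 \<times> C2) \<times> K))"
      proof
        fix g assume gS: "g \<in> S"
        then obtain x where x: "x \<in> K" "F g x \<in> K" and gc: "g \<in> carrier (G1 \<times>\<times> G2)"
          unfolding S_def by auto
        have "(g, x) \<in> A" unfolding A_def using x gc Ksub tg1 tg2 by auto
        moreover have "(g, x) \<in> (C1 \<times> C2) \<times> K" using SC gS x by auto
        ultimately show "g \<in> fst ` (A \<inter> ((C1 \<times> C2) \<times> K))" by force
      qed
      show "fst ` (A \<inter> ((C1 \<times> C2) \<times> K)) \<subseteq> S"
        unfolding A_def S_def using tg1 tg2 by force
    qed
    then show "compactin (prod_topology T1 T2) {h \<in> carrier (G1 \<times>\<times> G2). F h ` K \<inter> K \<noteq> {}}"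
      using image_compactin[OF cAB continuous_map_fst] S_def by simp
  qed
qed

end
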